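(* Let $K\ge 2$, let $L_1,\dots,L_K:\mathbb{R}^d\to\mathbb{R}$ be twice differentiable, and let $\mu>0$, $\rho,\delta\ge 0$. Assume every $L_k$ is $\mu$-smooth and $\rho$-Hessian Lipschitz. Let $\widehat{w}_1,\dots,\widehat{w}_{K-1}\in\mathbb{R}^d$ and let $H_1,\dots,H_{K-1}$ be symmetric $d\times d$ matrices with $\|H_k\|_2\le\mu$ and $\|H_k-\nabla^2L_k(\widehat{w}_k)\|_2\le\delta$ for all $k\in[K-1]$. Define \[ \widetilde{L}_{K-1}(w)=\sum_{k=1}^{K-1}\Big(L_k(\widehat{w}_k)+(w-\widehat{w}_k)^\top\nabla L_k(\widehat{w}_k)+\tfrac12(w-\widehat{w}_k)^\top H_k(w-\widehat{w}_k)\Big), \] $\widetilde{F}(w)=\frac1K\big(\widetilde{L}_{K-1}(w)+L_K(w)\big)$ and $F(w)=\frac1K\sum_{k=1}^K L_k(w)$. Let $\mathcal{W}\subseteq\mathbb{R}^d$, and suppose $F^*:=\min_{w\in\mathcal{W}}F(w)$ and $\widetilde{F}^*:=\min_{w\in\mathcal{W}}\widetilde{F}(w)$ exist. Let $w_0=\widehat{w}_{K-1}$ and run $T$ iterations of $w_t=w_{t-1}-\eta\nabla\widetilde{F}(w_{t-1})$ with $\eta=1/\mu$, the iterates lying in $\mathcal{W}$. Put $F_0=F(w_0)$, $\widetilde{F}_0=\widetilde{F}(w_0)$. Then \[ \frac1T\sum_{t=1}^T\|\nabla F(w_{t-1})\|_2\le\frac{\alpha}{\sqrt T}+\beta+\gamma_1\sqrt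 T+\gamma_2 T, \] where $\alpha=\sqrt{2\mu(F_0-F^* )}$, $\beta=\frac{\sqrt3}{K}\sum_{k=1}^{K-2}\big(\delta\|w_0-\widehat{w}_k\|_2+2\rho\|w_0-\widehat{w}_k\|_2^2\big)$, $\gamma_1=\delta\sqrt{\frac3\mu(\widetilde{F}_0-\widetilde{F}^* )}$, and $\gamma_2=\frac{4\rho}{\mu}(\widetilde{F}_0-\widetilde{F}^* )$.
   Context: $\|\cdot\|_2$ denotes the Euclidean norm for vectors and the operator norm for matrices; $[N]=\{1,\dots,N\}$. A differentiable $f$ is $\mu$-smooth if $\|\nabla f(w)-\nabla f(w')\|_2\le\mu\|w-w'\|_2$ for all $w,w'$, and $\rho$-Hessian Lipschitz if $\|\nabla^2 f(w)-\nabla^2 f(w')\|_2\le\rho\|w-w'\|_2$ for all $w,w'$. No convexity is assumed. *)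

theory Defs
  imports "HOL-Analysis.Analysis"
begin

definition mat_opnorm :: "real^'n^'n \<Rightarrow> real" where
  "mat_opnorm A = onorm (\<lambda>x. A *v x)"

definition Ltil :: "nat \<Rightarrow> (nat \<Rightarrow> real^'n \<Rightarrow> real) \<Rightarrow> (nat \<Rightarrow> real^'n \<Rightarrow> real^'n)
    \<Rightarrow> (nat \<Rightarrow> real^'n) \<Rightarrow> (nat \<Rightarrow> real^'n^'n) \<Rightarrow> real^'n \<Rightarrow> real" where
  "Ltil K L gL wh H w = (\<Sum>k=1..K-1. L k (wh k) + (w - wh k) \<bullet> gL k (wh k)
        + (1/2) * ((w - wh k) \<bullet> (H k *v (w - wh k))))"

definition Ftil :: "nat \<Rightarrow> (nat \<Rightarrow> real^'n \<Rightarrow> real) \<Rightarrow> (nat \<Rightarrow> real^'n \<Rightarrow> real^'n)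
    \<Rightarrow> (nat \<Rightarrow> real^'n) \<Rightarrow> (nat \<Rightarrow> real^'n^'n) \<Rightarrow> real^'n \<Rightarrow> real" where
  "Ftil K L gL wh H w = (1 / real K) * (Ltil K L gL wh H w + L K w)"

definition Ftil_grad :: "nat \<Rightarrow> (nat \<Rightarrow> real^'n \<Rightarrow> real^'n)
    \<Rightarrow> (nat \<Rightarrow> real^'n) \<Rightarrow> (nat \<Rightarrow> real^'n^'n) \<Rightarrow> real^'n \<Rightarrow> real^'n" where
  "Ftil_grad K gL wh H w = (1 / real K) *\<^sub>R
     ((\<Sum>k=1..K-1. gL k (wh k) + H k *v (w - wh k)) + gL K w)"

definition Fobj :: "nat \<Rightarrow> (nat \<Rightarrow> real^'n \<Rightarrow> real) \<Rightarrow> real^'n \<Rightarrow> real" where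
  "Fobj K L w = (1 / real K) * (\<Sum>k=1..K. L k w)"

definition Fobj_grad :: "nat \<Rightarrow> (nat \<Rightarrow> real^'n \<Rightarrow> real^'n) \<Rightarrow> real^'n \<Rightarrow> real^'n" where
  "Fobj_grad K gL w = (1 / real K) *\<^sub>R (\<Sum>k=1..K. gL k w)"

end

theory Submission
  imports Defs
begin

lemma descent_lemma:
  fixes \<phi> :: "real^'n \<Rightarrow> real" and g :: "real^'n \<Rightarrow> real^'n"
  assumes der: "\<And>x. (\<phi> has_derivative (\<lambda>h. g x \<bullet> h)) (at x)"
    and lip: "\<And>x y. norm (g x - g y) \<le> \<mu> * norm (x - y)"
  shows "\<phi> y \<le> \<phi> x + g x \<bullet> (y - x) + \<mu> / 2 * (norm (y - x))\<^sup>2"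
proof -
  define d where "d = y - x"
  define \<psi> where "\<psi> = (\<lambda>t::real. \<phi> (x + t *\<^sub>R d) - t * (g x \<bullet> d) - \<mu> / 2 * t\<^sup>2 * (norm d)\<^sup>2)"
  have "\<psi> 1 \<le> \<psi> 0"
  proof (rule DERIV_nonpos_imp_nonincreasing[where f=\<psi>])
    fix t :: real assume t: "0 \<le> t" "t \<le> 1"
    have d1: "((\<lambda>t. x + t *\<^sub>R d) has_derivative (\<lambda>s. s *\<^sub>R d)) (at t)"
      by (auto intro!: derivative_eq_intros)
    have d2: "((\<lambda>t. \<phi> (x + t *\<^sub>R d)) has_derivative (\<lambda>s. g (x + t *\<^sub>R d) \<bullet> (s *\<^sub>R d))) (at t)"
      using has_derivative_compose[OF d1 der] by simp
    have d3: "((\<lambda>t. \<phi> (x + t *\<^sub>R d)) has_real_derivative (g (x + t *\<^sub>R d) \<bullet> d)) (at t)"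
      by (rule has_derivative_imp_has_field_derivative[OF d2]) simp
    have "(\<psi> has_real_derivative (g (x + t *\<^sub>R d) \<bullet> d - g x \<bullet> d - \<mu> / 2 * (2 * t) * (norm d)\<^sup>2)) (at t)"
      unfolding \<psi>_def
      by (rule derivative_eq_intros d3 | simp)+
    moreover have "g (x + t *\<^sub>R d) \<bullet> d - g x \<bullet> d - \<mu> / 2 * (2 * t) * (norm d)\<^sup>2 \<le> 0"
    proof -
      have "g (x + t *\<^sub>R d) \<bullet> d - g x \<bullet> d = (g (x + t *\<^sub>R d) - g x) \<bullet> d"
        by (simp add: inner_diff_left)
      also have "\<dots> \<le> norm (g (x + t *\<^sub>R d) - g x) * norm d"
        by (rule norm_cauchy_schwarz)
      also have "\<dots> \<le> (\<mu> * norm (t *\<^sub>R d)) * norm d"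
        using lip[of "x + t *\<^sub>R d" x] by (simp add: mult_right_mono)
      also have "\<dots> = \<mu> * t * (norm d)\<^sup>2" using t by (simp add: power2_eq_square)
      finally show ?thesis by simp
    qed
    ultimately show "\<exists>y. (\<psi> has_real_derivative y) (at t) \<and> y \<le> 0" by blast
  qed simp
  then show ?thesis unfolding \<psi>_def d_def by simp
qed

lemma mat_opnorm_mult:
  fixes A :: "real^'n^'n"
  shows "norm (A *v x) \<le> mat_opnorm A * norm x"
  unfolding mat_opnorm_def by (rule onorm[OF matrix_vector_mul_bounded_linear])

lemma grad_taylor:
  fixes G :: "real^'n \<Rightarrow> real^'n" and Hf :: "real^'n \<Rightarrow> real^'n^'n"
  assumes hd: "\<And>x. (G has_derivative (\<lambda>h. Hf x *v h)) (at x)"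
    and hl: "\<And>x y. mat_opnorm (Hf x - Hf y) \<le> \<rho> * norm (x - y)"
    and rho: "\<rho> \<ge> 0"
  shows "norm (G b - G a - Hf a *v (b - a)) \<le> \<rho> * (norm (b - a))\<^sup>2"
proof -
  have "norm (G b - G a - (\<lambda>h. Hf a *v h) (b - a)) \<le> norm (b - a) * (\<rho> * norm (b - a))"
  proof (rule differentiable_bound_linearization[where S="closed_segment a b" and f=G and f'="\<lambda>x h. Hf x *v h" and ?x0.0=a])
    fix t :: real assume "t \<in> {0..1}"
    then show "a + t *\<^sub>R (b - a) \<in> closed_segment a b"
      unfolding in_segment by (rule_tac x=t in exI) (auto simp: algebra_simps)
  next
    fix x assume "x \<in> closed_segment a b"
    show "(G has_derivative (\<lambda>h. Hf x *v h)) (at x within closed_segment a b)"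
      by (rule has_derivative_at_withinI[OF hd])
  next
    fix x assume x: "x \<in> closed_segment a b"
    have eq: "(\<lambda>h. Hf x *v h) - (\<lambda>h. Hf a *v h) = (\<lambda>h. (Hf x - Hf a) *v h)"
      by (auto simp: matrix_vector_mult_diff_rdistrib)
    have "onorm (\<lambda>h. (Hf x - Hf a) *v h) = mat_opnorm (Hf x - Hf a)"
      unfolding mat_opnorm_def by simp
    also have "\<dots> \<le> \<rho> * norm (x - a)" by (rule hl)
    also have "\<dots> \<le> \<rho> * norm (b - a)"
      using dist_in_closed_segment[OF x] rho by (simp add: dist_norm mult_left_mono norm_minus_commute)
    finally show "onorm ((\<lambda>h. Hf x *v h) - (\<lambda>h. Hf a *v h)) \<le> \<rho> * norm (b - a)"
      by (simp add: eq)
  next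
    show "a \<in> closed_segment a b" by simp
  qed
  then show ?thesis by (simp add: power2_eq_square mult_ac)
qed

lemma Fobj_deriv:
  assumes grad: "\<And>k x. k \<in> {1..K} \<Longrightarrow> (L k has_derivative (\<lambda>h. gL k x \<bullet> h)) (at x)"
  shows "(Fobj K L has_derivative (\<lambda>h. Fobj_grad K gL x \<bullet> h)) (at x)"
proof -
  have "((\<lambda>w. \<Sum>k=1..K. L k w) has_derivative (\<lambda>h. \<Sum>k=1..K. gL k x \<bullet> h)) (at x)"
    by (rule has_derivative_sum) (rule grad)
  then have "((\<lambda>w. (1 / real K) * (\<Sum>k=1..K. L k w)) has_derivative
      (\<lambda>h. (1 / real K) * (\<Sum>k=1..K. gL k x \<bullet> h))) (at x)"
    by (rule has_derivative_mult_right)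
  moreover have "(\<lambda>h. (1 / real K) * (\<Sum>k=1..K. gL k x \<bullet> h)) = (\<lambda>h. Fobj_grad K gL x \<bullet> h)"
    unfolding Fobj_grad_def by (auto simp: inner_sum_left)
  ultimately show ?thesis unfolding Fobj_def[abs_def] by simp
qed

lemma Fobj_lip:
  assumes smooth: "\<And>k x y. k \<in> {1..K} \<Longrightarrow> norm (gL k x - gL k y) \<le> \<mu> * norm (x - y)"
    and K: "K \<ge> 1"
  shows "norm (Fobj_grad K gL x - Fobj_grad K gL y) \<le> \<mu> * norm (x - y)"
proof -
  have "Fobj_grad K gL x - Fobj_grad K gL y = (1 / real K) *\<^sub>R (\<Sum>k=1..K. gL k x - gL k y)"
    unfolding Fobj_grad_def by (simp add: sum_subtractf scaleR_diff_right)
  then have "norm (Fobj_grad K gL x - Fobj_grad K gL y) = (1 / real K) * norm (\<Sum>k=1..K. gL k x - gL k y)"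
    by simp
  also have "\<dots> \<le> (1 / real K) * (\<Sum>k=1..K. \<mu> * norm (x - y))"
    by (intro mult_left_mono order_trans[OF norm_sum] sum_mono smooth) auto
  also have "\<dots> = \<mu> * norm (x - y)" using K by simp
  finally show ?thesis .
qed

lemma sym_inner:
  fixes A :: "real^'n^'n"
  assumes "transpose A = A"
  shows "x \<bullet> (A *v y) = (A *v x) \<bullet> y"
proof -
  have "x \<bullet> (A *v y) = (x v* A) \<bullet> y" by (simp add: dot_lmul_matrix)
  also have "x v* A = A *v x" using vector_transpose_matrix[of x A] assms by simp
  finally show ?thesis .
qed

lemma quad_deriv:
  fixes A :: "real^'n^'n"
  assumes "transpose A = A"
  shows "((\<lambda>w. c + (w - a) \<bullet> v + (1/2) * ((w - a) \<bullet> (A *v (w - a))))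
     has_derivative (\<lambda>h. (v + A *v (x - a)) \<bullet> h)) (at x)"
proof -
  have lin: "bounded_linear ((*v) A)" by (rule matrix_vector_mul_bounded_linear)
  have d1: "((\<lambda>w. A *v (w - a)) has_derivative (\<lambda>h. A *v h)) (at x)"
    by (rule bounded_linear.has_derivative[OF lin, of "\<lambda>w. w - a" "\<lambda>h. h", simplified])
      (auto intro!: derivative_eq_intros)
  show ?thesis
    apply (rule has_derivative_eq_rhs)
     apply (rule derivative_eq_intros d1 refl | simp)+
    using sym_inner[OF assms]
    apply (auto simp: fun_eq_iff inner_add_left inner_commute algebra_simps)
    apply (simp add: field_simps)
    done
qed

lemma Ftil_deriv:
  assumes gK: "(L K has_derivative (\<lambda>h. gL K x \<bullet> h)) (at x)"
    and sym: "\<And>k. k \<in> {1..K-1} \<Longrightarrow> transpose (H k) = H k"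
  shows "(Ftil K L gL wh H has_derivative (\<lambda>h. Ftil_grad K gL wh H x \<bullet> h)) (at x)"
proof -
  have "(Ltil K L gL wh H has_derivative
     (\<lambda>h. \<Sum>k=1..K-1. (gL k (wh k) + H k *v (x - wh k)) \<bullet> h)) (at x)"
    unfolding Ltil_def[abs_def]
    by (rule has_derivative_sum) (rule quad_deriv[OF sym], simp)
  then have "((\<lambda>w. (1 / real K) * (Ltil K L gL wh H w + L K w)) has_derivative
     (\<lambda>h. (1 / real K) * ((\<Sum>k=1..K-1. (gL k (wh k) + H k *v (x - wh k)) \<bullet> h) + gL K x \<bullet> h))) (at x)"
    by (intro has_derivative_mult_right has_derivative_add gK)
  moreover have "(\<lambda>h. (1 / real K) * ((\<Sum>k=1..K-1. (gL k (wh k) + H k *v (x - wh k)) \<bullet> h) + gL K x \<bullet> h))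
     = (\<lambda>h. Ftil_grad K gL wh H x \<bullet> h)"
    unfolding Ftil_grad_def by (auto simp: inner_sum_left inner_add_left)
  ultimately show ?thesis unfolding Ftil_def[abs_def] by simp
qed

lemma Ftil_lip:
  assumes smooth: "\<And>x y. norm (gL K x - gL K y) \<le> \<mu> * norm (x - y)"
    and Hb: "\<And>k. k \<in> {1..K-1} \<Longrightarrow> mat_opnorm (H k) \<le> \<mu>"
    and K: "K \<ge> 1"
  shows "norm (Ftil_grad K gL wh H x - Ftil_grad K gL wh H y) \<le> \<mu> * norm (x - y)"
proof -
  have "Ftil_grad K gL wh H x - Ftil_grad K gL wh H y =
      (1 / real K) *\<^sub>R ((\<Sum>k=1..K-1. H k *v (x - y)) + (gL K x - gL K y))"
    unfolding Ftil_grad_def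
    by (simp add: sum_subtractf[symmetric] scaleR_diff_right[symmetric] matrix_vector_mult_diff_distrib algebra_simps)
  then have "norm (Ftil_grad K gL wh H x - Ftil_grad K gL wh H y) =
      (1 / real K) * norm ((\<Sum>k=1..K-1. H k *v (x - y)) + (gL K x - gL K y))"
    by simp
  also have "\<dots> \<le> (1 / real K) * ((\<Sum>k=1..K-1. \<mu> * norm (x - y)) + \<mu> * norm (x - y))"
  proof (intro mult_left_mono order_trans[OF norm_triangle_ineq] add_mono order_trans[OF norm_sum] sum_mono smooth)
    fix k assume k: "k \<in> {1..K-1}"
    show "norm (H k *v (x - y)) \<le> \<mu> * norm (x - y)"
      using mat_opnorm_mult[of "H k" "x - y"] Hb[OF k]
      by (meson mult_right_mono norm_ge_zero order_trans)
  qed simp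
  also have "\<dots> = \<mu> * norm (x - y)" using K by (simp add: algebra_simps of_nat_diff)
  finally show ?thesis .
qed

lemma err_bound:
  fixes K :: nat and \<rho> \<delta> Dm :: real
  assumes K2: "K \<ge> 2"
    and hess: "\<And>k x. k \<in> {1..K} \<Longrightarrow> (gL k has_derivative (\<lambda>h. HL k x *v h)) (at x)"
    and hess_lip: "\<And>k x y. k \<in> {1..K} \<Longrightarrow> mat_opnorm (HL k x - HL k y) \<le> \<rho> * norm (x - y)"
    and H_approx: "\<And>k. k \<in> {1..K-1} \<Longrightarrow> mat_opnorm (H k - HL k (wh k)) \<le> \<delta>"
    and rho: "\<rho> \<ge> 0" and delta: "\<delta> \<ge> 0"
    and z: "z = wh (K - 1)"
    and D: "norm (v - z) \<le> Dm"
  shows "norm (Fobj_grad K gL v - Ftil_grad K gL wh H v)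
     \<le> (1 / real K) * (\<Sum>k=1..K-2. \<delta> * norm (z - wh k) + 2 * \<rho> * (norm (z - wh k))\<^sup>2)
        + \<delta> * Dm + 2 * \<rho> * Dm\<^sup>2"
proof -
  define c where "c = \<delta> * Dm + 2 * \<rho> * Dm\<^sup>2"
  define \<psi> where "\<psi> k = \<delta> * norm (z - wh k) + 2 * \<rho> * (norm (z - wh k))\<^sup>2" for k
  have KS: "K = Suc (K - 1)" using K2 by simp
  have sumK: "(\<Sum>k=1..K. gL k v) = (\<Sum>k=1..K-1. gL k v) + gL K v"
    by (subst KS, subst sum.cl_ivl_Suc) (use K2 in auto)
  have diff: "Fobj_grad K gL v - Ftil_grad K gL wh H v =
     (1 / real K) *\<^sub>R (\<Sum>k=1..K-1. gL k v - gL k (wh k) - H k *v (v - wh k))"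
    unfolding Fobj_grad_def Ftil_grad_def sumK
    by (simp add: sum_subtractf sum.distrib scaleR_diff_right[symmetric])
  have termb: "norm (gL k v - gL k (wh k) - H k *v (v - wh k)) \<le> \<psi> k + c" if k: "k \<in> {1..K-1}" for k
  proof -
    define a where "a = wh k"
    define r where "r = norm (v - a)"
    have kK: "k \<in> {1..K}" using k by auto
    have t1: "norm (gL k v - gL k a - HL k a *v (v - a)) \<le> \<rho> * r\<^sup>2"
      unfolding r_def by (rule grad_taylor[OF hess[OF kK] hess_lip[OF kK] rho])
    have t2: "norm ((H k - HL k a) *v (v - a)) \<le> \<delta> * r"
      using mat_opnorm_mult[of "H k - HL k a" "v - a"] H_approx[OF k] unfolding r_def a_def
      by (meson mult_right_mono norm_ge_zero order_trans)
    have eqn: "gL k v - gL k a - H k *v (v - a) = (gL k v - gL k a - HL k a *v (v - a)) - (H k - HL k a) *v (v - a)"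
      by (simp add: matrix_vector_mult_diff_rdistrib)
    have "norm (gL k v - gL k a - H k *v (v - a)) \<le> \<rho> * r\<^sup>2 + \<delta> * r"
      unfolding eqn using t1 t2 norm_triangle_ineq4[of "gL k v - gL k a - HL k a *v (v - a)" "(H k - HL k a) *v (v - a)"]
      by linarith
    note main = this
    define q where "q = norm (z - a)"
    have rq: "r \<le> q + Dm" unfolding r_def q_def
      using norm_triangle_ineq[of "v - z" "z - a"] D by simp
    have r0: "r \<ge> 0" "q \<ge> 0" unfolding r_def q_def by simp_all
    have sq: "r\<^sup>2 \<le> (q + Dm)\<^sup>2" using rq r0 by (intro power_mono) auto
    have sq2: "(q + Dm)\<^sup>2 \<le> 2 * q\<^sup>2 + 2 * Dm\<^sup>2"
    proof -
      have "2 * q\<^sup>2 + 2 * Dm\<^sup>2 - (q + Dm)\<^sup>2 = (q - Dm)\<^sup>2" by (simp add: power2_eq_square algebra_simps)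
      moreover have "(q - Dm)\<^sup>2 \<ge> 0" by simp
      ultimately show ?thesis by linarith
    qed
    have "\<rho> * r\<^sup>2 \<le> \<rho> * (2 * q\<^sup>2 + 2 * Dm\<^sup>2)" using sq sq2 rho by (intro mult_left_mono) auto
    moreover have "\<delta> * r \<le> \<delta> * (q + Dm)" using rq delta by (rule mult_left_mono)
    ultimately show ?thesis using main unfolding \<psi>_def c_def q_def a_def by (simp add: algebra_simps)
  qed
  have psi0: "\<psi> (K - 1) = 0" unfolding \<psi>_def z by simp
  have KS2: "K - 1 = Suc (K - 2)" using K2 by simp
  have "(\<Sum>k=1..K-1. \<psi> k) = (\<Sum>k=1..K-2. \<psi> k)"
    by (subst KS2, subst sum.cl_ivl_Suc) (use psi0 KS2 in auto)
  have "norm (Fobj_grad K gL v - Ftil_grad K gL wh H v)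
      = (1 / real K) * norm (\<Sum>k=1..K-1. gL k v - gL k (wh k) - H k *v (v - wh k))"
    by (simp add: diff)
  also have "\<dots> \<le> (1 / real K) * (\<Sum>k=1..K-1. \<psi> k + c)"
    by (intro mult_left_mono order_trans[OF norm_sum] sum_mono termb) auto
  also have "\<dots> = (1 / real K) * (\<Sum>k=1..K-2. \<psi> k) + (real K - 1) / real K * c"
  proof -
    have "(\<Sum>k=1..K-1. \<psi> k + c) = (\<Sum>k=1..K-1. \<psi> k) + real (K - 1) * c"
      by (simp add: sum.distrib)
    also have "\<dots> = (\<Sum>k=1..K-2. \<psi> k) + (real K - 1) * c"
      using \<open>(\<Sum>k=1..K-1. \<psi> k) = (\<Sum>k=1..K-2. \<psi> k)\<close> K2 by (simp add: of_nat_diff)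
    finally show ?thesis by (simp add: distrib_left)
  qed
  also have "\<dots> \<le> (1 / real K) * (\<Sum>k=1..K-2. \<psi> k) + c"
  proof -
    have c0: "c \<ge> 0" unfolding c_def using D rho delta
      by (metis add_nonneg_nonneg mult_nonneg_nonneg norm_ge_zero order_trans zero_le_numeral zero_le_power2)
    have "(real K - 1) / real K \<le> 1" using K2 by simp
    then have "(real K - 1) / real K * c \<le> 1 * c" using c0 by (rule mult_right_mono)
    then show ?thesis by linarith
  qed
  finally show ?thesis unfolding \<psi>_def c_def by simp
qed

lemma step_id:
  fixes gv g :: "real^'n" and \<mu> :: real
  assumes "\<mu> > 0"
  shows "gv \<bullet> (- (1 / \<mu>) *\<^sub>R g) + \<mu> / 2 * (norm (- (1 / \<mu>) *\<^sub>R g))\<^sup>2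
     = (- (gv \<bullet> g) + (norm g)\<^sup>2 / 2) / \<mu>"
  using assms by (simp add: power_mult_distrib power2_eq_square field_simps)

lemma norm_diff_sq:
  fixes f e :: "real^'n"
  shows "(norm (f - e))\<^sup>2 = (norm f)\<^sup>2 - 2 * (f \<bullet> e) + (norm e)\<^sup>2"
  by (simp add: power2_norm_eq_inner inner_diff_left inner_diff_right inner_commute)

theorem theorem2:
  fixes K T :: nat
    and L :: "nat \<Rightarrow> real^'n \<Rightarrow> real"
    and gL :: "nat \<Rightarrow> real^'n \<Rightarrow> real^'n"
    and HL :: "nat \<Rightarrow> real^'n \<Rightarrow> real^'n^'n"
    and wh :: "nat \<Rightarrow> real^'n"
    and H :: "nat \<Rightarrow> real^'n^'n"
    and W :: "(real^'n) set"
    and w :: "nat \<Rightarrow> real^'n"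
    and \<mu> \<rho> \<delta> Fstar Ftstar :: real
  assumes K2: "K \<ge> 2"
    and mu_pos: "\<mu> > 0" and rho_nn: "\<rho> \<ge> 0" and delta_nn: "\<delta> \<ge> 0"
    and grad: "\<And>k x. k \<in> {1..K} \<Longrightarrow> (L k has_derivative (\<lambda>h. gL k x \<bullet> h)) (at x)"
    and hess: "\<And>k x. k \<in> {1..K} \<Longrightarrow> (gL k has_derivative (\<lambda>h. HL k x *v h)) (at x)"
    and smooth: "\<And>k x y. k \<in> {1..K} \<Longrightarrow> norm (gL k x - gL k y) \<le> \<mu> * norm (x - y)"
    and hess_lip: "\<And>k x y. k \<in> {1..K} \<Longrightarrow> mat_opnorm (HL k x - HL k y) \<le> \<rho> * norm (x - y)"
    and H_sym: "\<And>k. k \<in> {1..K-1} \<Longrightarrow> transpose (H k) = H k"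
    and H_bnd: "\<And>k. k \<in> {1..K-1} \<Longrightarrow> mat_opnorm (H k) \<le> \<mu>"
    and H_approx: "\<And>k. k \<in> {1..K-1} \<Longrightarrow> mat_opnorm (H k - HL k (wh k)) \<le> \<delta>"
    and Fstar_min: "Fstar \<in> Fobj K L ` W" "\<And>v. v \<in> W \<Longrightarrow> Fstar \<le> Fobj K L v"
    and Ftstar_min: "Ftstar \<in> Ftil K L gL wh H ` W" "\<And>v. v \<in> W \<Longrightarrow> Ftstar \<le> Ftil K L gL wh H v"
    and T_pos: "T \<ge> 1"
    and w0: "w 0 = wh (K - 1)"
    and step: "\<And>t. t \<in> {1..T} \<Longrightarrow> w t = w (t - 1) - (1 / \<mu>) *\<^sub>R Ftil_grad K gL wh H (w (t - 1))"
    and in_W: "\<And>t. t \<le> T \<Longrightarrow> w t \<in> W"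
  shows "(1 / real T) * (\<Sum>t=1..T. norm (Fobj_grad K gL (w (t - 1))))
     \<le> sqrt (2 * \<mu> * (Fobj K L (w 0) - Fstar)) / sqrt (real T)
       + sqrt 3 / real K * (\<Sum>k=1..K-2. \<delta> * norm (w 0 - wh k) + 2 * \<rho> * (norm (w 0 - wh k))\<^sup>2)
       + \<delta> * sqrt (3 / \<mu> * (Ftil K L gL wh H (w 0) - Ftstar)) * sqrt (real T)
       + 4 * \<rho> / \<mu> * (Ftil K L gL wh H (w 0) - Ftstar) * real T"
proof -
  have K1: "K \<ge> 1" using K2 by simp
  have KK: "K \<in> {1..K}" using K1 by simp
  let ?F = "Fobj K L" and ?gF = "Fobj_grad K gL"
  let ?Ft = "Ftil K L gL wh H" and ?gt = "Ftil_grad K gL wh H"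
  have derF: "\<And>x. (?F has_derivative (\<lambda>h. ?gF x \<bullet> h)) (at x)"
    by (rule Fobj_deriv[OF grad])
  have lipF: "\<And>x y. norm (?gF x - ?gF y) \<le> \<mu> * norm (x - y)"
    by (rule Fobj_lip[OF smooth K1])
  have derFt: "\<And>x. (?Ft has_derivative (\<lambda>h. ?gt x \<bullet> h)) (at x)"
    by (rule Ftil_deriv[where L=L and gL=gL and K=K and H=H, OF grad[OF KK] H_sym])
  have lipFt: "\<And>x y. norm (?gt x - ?gt y) \<le> \<mu> * norm (x - y)"
    by (rule Ftil_lip[where gL=gL and K=K and H=H, OF smooth[OF KK] H_bnd K1])
  define g where "g t = ?gt (w t)" for t
  define f where "f t = ?gF (w t)" for t
  define e where "e t = f t - g t" for t
  have stepS: "w (Suc t) - w t = - (1 / \<mu>) *\<^sub>R g t" if "t < T" for t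
    using step[of "Suc t"] that unfolding g_def by simp
  have descFt: "(norm (g t))\<^sup>2 \<le> 2 * \<mu> * (?Ft (w t) - ?Ft (w (Suc t)))" if t: "t < T" for t
  proof -
    have "?Ft (w (Suc t)) \<le> ?Ft (w t) + ?gt (w t) \<bullet> (w (Suc t) - w t) + \<mu> / 2 * (norm (w (Suc t) - w t))\<^sup>2"
      by (rule descent_lemma[OF derFt lipFt])
    also have "\<dots> = ?Ft (w t) + (- (g t \<bullet> g t) + (norm (g t))\<^sup>2 / 2) / \<mu>"
      unfolding stepS[OF t] using step_id[OF mu_pos] unfolding g_def by simp
    also have "\<dots> = ?Ft (w t) - (norm (g t))\<^sup>2 / (2 * \<mu>)"
      by (simp add: power2_norm_eq_inner field_simps)
    finally show ?thesis using mu_pos by (simp add: field_simps)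
  qed
  have descF: "(norm (f t))\<^sup>2 - (norm (e t))\<^sup>2 \<le> 2 * \<mu> * (?F (w t) - ?F (w (Suc t)))" if t: "t < T" for t
  proof -
    have "?F (w (Suc t)) \<le> ?F (w t) + ?gF (w t) \<bullet> (w (Suc t) - w t) + \<mu> / 2 * (norm (w (Suc t) - w t))\<^sup>2"
      by (rule descent_lemma[OF derF lipF])
    also have "\<dots> = ?F (w t) + (- (f t \<bullet> g t) + (norm (g t))\<^sup>2 / 2) / \<mu>"
      unfolding stepS[OF t] using step_id[OF mu_pos] unfolding f_def by simp
    also have "g t = f t - e t" unfolding e_def by simp
    also have "- (f t \<bullet> (f t - e t)) + (norm (f t - e t))\<^sup>2 / 2 = - (norm (f t))\<^sup>2 / 2 + (norm (e t))\<^sup>2 / 2"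
      unfolding norm_diff_sq by (simp add: inner_diff_right power2_norm_eq_inner field_simps)
    finally show ?thesis using mu_pos by (simp add: field_simps)
  qed
  have sumFt: "(\<Sum>t<n. (norm (g t))\<^sup>2) \<le> 2 * \<mu> * (?Ft (w 0) - ?Ft (w n))" if "n \<le> T" for n
    using that
  proof (induction n)
    case 0 then show ?case by simp
  next
    case (Suc n)
    then have "(\<Sum>t<n. (norm (g t))\<^sup>2) \<le> 2 * \<mu> * (?Ft (w 0) - ?Ft (w n))" by simp
    moreover have "(norm (g n))\<^sup>2 \<le> 2 * \<mu> * (?Ft (w n) - ?Ft (w (Suc n)))"
      using descFt Suc.prems by simp
    ultimately show ?case by (simp add: algebra_simps)
  qed
  have sumF: "(\<Sum>t<n. (norm (f t))\<^sup>2 - (norm (e t))\<^sup>2) \<le> 2 * \<mu> * (?F (w 0) - ?F (w n))" if "n \<le> T" for n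
    using that
  proof (induction n)
    case 0 then show ?case by simp
  next
    case (Suc n)
    then have "(\<Sum>t<n. (norm (f t))\<^sup>2 - (norm (e t))\<^sup>2) \<le> 2 * \<mu> * (?F (w 0) - ?F (w n))" by simp
    moreover have "(norm (f n))\<^sup>2 - (norm (e n))\<^sup>2 \<le> 2 * \<mu> * (?F (w n) - ?F (w (Suc n)))"
      using descF Suc.prems by simp
    ultimately show ?case by (simp add: algebra_simps)
  qed
  define G where "G = ?Ft (w 0) - Ftstar"
  define Fg where "Fg = ?F (w 0) - Fstar"
  have G0: "G \<ge> 0" unfolding G_def using Ftstar_min(2)[OF in_W[of 0]] by simp
  have Fg0: "Fg \<ge> 0" unfolding Fg_def using Fstar_min(2)[OF in_W[of 0]] by simp
  have Gsum: "(\<Sum>t<T. (norm (g t))\<^sup>2) \<le> 2 * \<mu> * G"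
  proof -
    have "Ftstar \<le> ?Ft (w T)" using Ftstar_min(2)[OF in_W[of T]] by simp
    then have "2 * \<mu> * (?Ft (w 0) - ?Ft (w T)) \<le> 2 * \<mu> * G"
      unfolding G_def using mu_pos by (intro mult_left_mono) auto
    then show ?thesis using sumFt[of T] by simp
  qed
  have Fsum: "(\<Sum>t<T. (norm (f t))\<^sup>2 - (norm (e t))\<^sup>2) \<le> 2 * \<mu> * Fg"
  proof -
    have "Fstar \<le> ?F (w T)" using Fstar_min(2)[OF in_W[of T]] by simp
    then have "2 * \<mu> * (?F (w 0) - ?F (w T)) \<le> 2 * \<mu> * Fg"
      unfolding Fg_def using mu_pos by (intro mult_left_mono) auto
    then show ?thesis using sumF[of T] by simp
  qed
  have disp: "w n - w 0 = - (1 / \<mu>) *\<^sub>R (\<Sum>t<n. g t)" if "n \<le> T" for n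
    using that
  proof (induction n)
    case 0 then show ?case by simp
  next
    case (Suc n)
    then have "w n - w 0 = - (1 / \<mu>) *\<^sub>R (\<Sum>t<n. g t)" by simp
    moreover have "w (Suc n) - w n = - (1 / \<mu>) *\<^sub>R g n" using stepS Suc.prems by simp
    moreover have "w (Suc n) - w 0 = (w (Suc n) - w n) + (w n - w 0)" by simp
    ultimately show ?case by (simp add: scaleR_add_right)
  qed
  define Dm where "Dm = sqrt (2 * real T * G / \<mu>)"
  have Dbound: "norm (w t - w 0) \<le> Dm" if t: "t < T" for t
  proof -
    have "norm (w t - w 0) = (1 / \<mu>) * norm (\<Sum>s<t. g s)"
      using disp[of t] t mu_pos by simp
    also have "\<dots> \<le> (1 / \<mu>) * (\<Sum>s<t. norm (g s))"
      using mu_pos by (intro mult_left_mono norm_sum) auto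
    finally have n1: "norm (w t - w 0) \<le> (1 / \<mu>) * (\<Sum>s<t. norm (g s))" .
    have "(\<Sum>s<t. norm (g s))\<^sup>2 \<le> (\<Sum>s<t. (norm (g s))\<^sup>2) * real t"
      using sum_squared_le_sum_of_squares[of "\<lambda>s. norm (g s)" "{..<t}"] by simp
    also have "\<dots> \<le> (\<Sum>s<T. (norm (g s))\<^sup>2) * real T"
    proof (rule mult_mono)
      show "(\<Sum>s<t. (norm (g s))\<^sup>2) \<le> (\<Sum>s<T. (norm (g s))\<^sup>2)"
        by (rule sum_mono2) (use t in auto)
    qed (use t in \<open>auto intro: sum_nonneg\<close>)
    also have "\<dots> \<le> 2 * \<mu> * G * real T" using Gsum by (intro mult_right_mono) auto
    finally have sq: "(\<Sum>s<t. norm (g s))\<^sup>2 \<le> 2 * \<mu> * G * real T" .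
    have "(norm (w t - w 0))\<^sup>2 \<le> ((1 / \<mu>) * (\<Sum>s<t. norm (g s)))\<^sup>2"
      using n1 by (intro power_mono) auto
    also have "\<dots> = (\<Sum>s<t. norm (g s))\<^sup>2 / \<mu>\<^sup>2" by (simp add: power_divide)
    also have "\<dots> \<le> 2 * \<mu> * G * real T / \<mu>\<^sup>2" using sq mu_pos by (intro divide_right_mono) auto
    also have "\<dots> = 2 * real T * G / \<mu>" using mu_pos by (simp add: power2_eq_square field_simps)
    finally have "(norm (w t - w 0))\<^sup>2 \<le> 2 * real T * G / \<mu>" .
    then show ?thesis unfolding Dm_def by (simp add: real_le_rsqrt)
  qed
  define B where "B = (1 / real K) * (\<Sum>k=1..K-2. \<delta> * norm (w 0 - wh k) + 2 * \<rho> * (norm (w 0 - wh k))\<^sup>2)"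
  define E where "E = B + \<delta> * Dm + 2 * \<rho> * Dm\<^sup>2"
  have ebound: "norm (e t) \<le> E" if t: "t < T" for t
    unfolding e_def f_def g_def E_def B_def
    by (rule err_bound[where gL=gL and H=H and wh=wh and HL=HL, OF K2 hess hess_lip H_approx rho_nn delta_nn w0 Dbound[OF t]])
  have B0: "B \<ge> 0" unfolding B_def using rho_nn delta_nn by (intro mult_nonneg_nonneg sum_nonneg) auto
  have Dm0: "Dm \<ge> 0" unfolding Dm_def using G0 mu_pos by simp
  have E0: "E \<ge> 0" unfolding E_def using B0 Dm0 rho_nn delta_nn by simp
  have esum: "(\<Sum>t<T. (norm (e t))\<^sup>2) \<le> real T * E\<^sup>2"
  proof -
    have "(\<Sum>t<T. (norm (e t))\<^sup>2) \<le> (\<Sum>t<T. E\<^sup>2)"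
      using ebound by (intro sum_mono power_mono) auto
    then show ?thesis by simp
  qed
  have fsum: "(\<Sum>t<T. (norm (f t))\<^sup>2) \<le> 2 * \<mu> * Fg + real T * E\<^sup>2"
    using Fsum esum by (simp add: sum_subtractf)
  define S where "S = (\<Sum>t<T. norm (f t))"
  have Tpos: "real T > 0" using T_pos by simp
  have S2: "S\<^sup>2 \<le> (2 * \<mu> * Fg + real T * E\<^sup>2) * real T"
  proof -
    have "S\<^sup>2 \<le> (\<Sum>t<T. (norm (f t))\<^sup>2) * real T"
      unfolding S_def using sum_squared_le_sum_of_squares[of "\<lambda>s. norm (f s)" "{..<T}"] by simp
    also have "\<dots> \<le> (2 * \<mu> * Fg + real T * E\<^sup>2) * real T"
      using fsum Tpos by (intro mult_right_mono) auto
    finally show ?thesis .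
  qed
  define a where "a = sqrt (2 * \<mu> * Fg)"
  define sT where "sT = sqrt (real T)"
  have a0: "a \<ge> 0" unfolding a_def using Fg0 mu_pos by simp
  have a2: "a * a = 2 * \<mu> * Fg" unfolding a_def using Fg0 mu_pos by simp
  have sT0: "sT > 0" unfolding sT_def using Tpos by simp
  have Ts: "real T = sT * sT" unfolding sT_def by simp
  define R where "R = a * sT + real T * E"
  have R0: "R \<ge> 0" unfolding R_def using a0 sT0 E0 Tpos by simp
  have "(2 * \<mu> * Fg + real T * E\<^sup>2) * real T \<le> R\<^sup>2"
  proof -
    have "R\<^sup>2 = (a * a) * (sT * sT) + 2 * (a * sT) * (real T * E) + (real T * E) * (real T * E)"
      unfolding R_def by (simp add: power2_eq_square algebra_simps)
    also have "\<dots> = (2 * \<mu> * Fg) * real T + 2 * (a * sT) * (real T * E) + (real T * E) * (real T * E)"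
      unfolding a2 Ts[symmetric] by simp
    finally have eq: "R\<^sup>2 = (2 * \<mu> * Fg) * real T + 2 * (a * sT) * (real T * E) + (real T * E) * (real T * E)" .
    have p: "2 * (a * sT) * (real T * E) \<ge> 0" using a0 sT0 E0 by simp
    have "(2 * \<mu> * Fg + real T * E\<^sup>2) * real T = (2 * \<mu> * Fg) * real T + (real T * E) * (real T * E)"
      by (simp add: power2_eq_square algebra_simps)
    then show ?thesis using eq p by linarith
  qed
  then have "S\<^sup>2 \<le> R\<^sup>2" using S2 by linarith
  then have SR: "S \<le> R" using R0 by (rule power2_le_imp_le)
  have lhs: "(1 / real T) * (\<Sum>t=1..T. norm (Fobj_grad K gL (w (t - 1)))) = S / real T"
    unfolding S_def f_def using sum_bounds_lt_plus1[of "\<lambda>t. norm (Fobj_grad K gL (w (t - 1)))" T]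
    by simp
  have "S / real T \<le> R / real T" using SR Tpos by (simp add: divide_right_mono)
  also have "R / real T = sqrt (2 * \<mu> * Fg) / sqrt (real T) + E"
  proof -
    have "R / real T = (a * sT + (sT * sT) * E) / (sT * sT)" unfolding R_def Ts by simp
    also have "\<dots> = a / sT + E" using sT0 by (simp add: field_simps)
    finally show ?thesis unfolding a_def sT_def .
  qed
  also have "E \<le> sqrt 3 / real K * (\<Sum>k=1..K-2. \<delta> * norm (w 0 - wh k) + 2 * \<rho> * (norm (w 0 - wh k))\<^sup>2)
       + \<delta> * sqrt (3 / \<mu> * G) * sqrt (real T)
       + 4 * \<rho> / \<mu> * G * real T"
  proof -
    define \<Sigma> where "\<Sigma> = (\<Sum>k=1..K-2. \<delta> * norm (w 0 - wh k) + 2 * \<rho> * (norm (w 0 - wh k))\<^sup>2)"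
    have s0: "\<Sigma> \<ge> 0" unfolding \<Sigma>_def using rho_nn delta_nn by (intro sum_nonneg) auto
    have b: "B \<le> sqrt 3 / real K * \<Sigma>"
    proof -
      have "1 \<le> sqrt 3" by simp
      then have "1 * \<Sigma> \<le> sqrt 3 * \<Sigma>" using s0 by (rule mult_right_mono)
      then show ?thesis unfolding B_def \<Sigma>_def[symmetric] using K1
        by (simp add: divide_right_mono)
    qed
    have d: "Dm \<le> sqrt (3 / \<mu> * G) * sqrt (real T)"
      unfolding Dm_def real_sqrt_mult[symmetric]
      using G0 mu_pos Tpos by (intro real_sqrt_le_mono) (simp add: field_simps mult_right_mono)
    have d2: "Dm\<^sup>2 = 2 * real T * G / \<mu>" unfolding Dm_def using G0 mu_pos by simp
    have "\<delta> * Dm \<le> \<delta> * (sqrt (3 / \<mu> * G) * sqrt (real T))" using d delta_nn by (rule mult_left_mono)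
    moreover have "2 * \<rho> * Dm\<^sup>2 = 4 * \<rho> / \<mu> * G * real T" unfolding d2 by (simp add: field_simps)
    ultimately show ?thesis using b unfolding E_def \<Sigma>_def by simp
  qed
  finally show ?thesis unfolding lhs Fg_def G_def by simp
qed

end
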